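(* Let $N\ge 2$ and for $0\le k\le\lfloor N/2\rfloor$ let $\mathcal I_k$ be the set of $k$-element subsets $I\subset\mathbb{Z}_N$ such that $i\not\equiv i'+1\pmod N$ for all $i,i'\in I$ (so $|\mathcal I_0|=1$). Then for every $j$ with $1\le j\le\lfloor N/2\rfloor$, $$\sum_{k=0}^{j}(-1)^k\,|\mathcal I_k|\binom{N-2k}{j-k}=0 .$$ *)

theory Defs
  imports Main
begin

definition cyc_indep_sets :: "nat \<Rightarrow> nat \<Rightarrow> nat set set" where
  "cyc_indep_sets N k = {I. I \<subseteq> {0..<N} \<and> card I = k \<and>
      (\<forall>i\<in>I. \<forall>i'\<in>I. i \<noteq> (i' + 1) mod N)}"

end

theory Submission
  imports Defs
begin

definition sc :: "nat \<Rightarrow> nat \<Rightarrow> nat" where "sc N i = (i + 1) mod N"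

definition valid :: "nat \<Rightarrow> nat set \<Rightarrow> nat set \<Rightarrow> bool" where
  "valid N I T \<longleftrightarrow> I \<subseteq> {0..<N} \<and> T \<subseteq> {0..<N} \<and> (\<forall>i\<in>I. \<forall>i'\<in>I. i \<noteq> sc N i')
     \<and> T \<inter> (I \<union> sc N ` I) = {}"

definition good :: "nat \<Rightarrow> nat set \<Rightarrow> nat set \<Rightarrow> nat \<Rightarrow> bool" where
  "good N I T v \<longleftrightarrow> v \<in> I \<or> (v \<in> T \<and> sc N v \<notin> T \<and> sc N v \<notin> I)"

definition flip :: "nat \<Rightarrow> nat set \<times> nat set \<Rightarrow> nat set \<times> nat set" where
  "flip N x = (let I = fst x; T = snd x; v = (LEAST v. good N I T v) in
     if v \<in> I then (I - {v}, insert v T) else (insert v I, T - {v}))"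

lemma sc_inj: "inj_on (sc N) {0..<N}"
  unfolding inj_on_def sc_def
  using mod_Suc by auto

lemma sc_ne: "N \<ge> 2 \<Longrightarrow> sc N v \<noteq> v"
proof -
  assume N: "N \<ge> 2"
  consider "v \<ge> N" | "v + 1 < N" | "v + 1 = N" by linarith
  then show ?thesis
  proof cases
    case 1
    have "(v + 1) mod N < N" using N by simp
    then show ?thesis unfolding sc_def using 1 by linarith
  next
    case 2 then show ?thesis unfolding sc_def by simp
  next
    case 3 then show ?thesis unfolding sc_def using N by simp
  qed
qed

lemma closed_all:
  assumes "N \<ge> 2" "v0 \<in> T" "T \<subseteq> {0..<N}" "\<forall>v\<in>T. sc N v \<in> T"
  shows "T = {0..<N}"
proof -
  have m: "(v0 + m) mod N \<in> T" for m
  proof (induction m)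
    case 0 then show ?case using assms by auto
  next
    case (Suc m)
    have "(v0 + Suc m) mod N = sc N ((v0 + m) mod N)" unfolding sc_def by (simp add: mod_simps)
    then show ?case using Suc assms(4) by auto
  qed
  have "u \<in> T" if "u < N" for u
  proof -
    have "v0 < N" using assms by auto
    then have "v0 + (N - v0 + u) = N + u" by simp
    then have "(v0 + (N - v0 + u)) mod N = u" using that by simp
    then show ?thesis using m[of "N - v0 + u"] by simp
  qed
  then show ?thesis using assms(3) by auto
qed

lemma good_exists:
  assumes "N \<ge> 2" "valid N I T" "card I + card T = j" "1 \<le> j" "j < N"
  shows "\<exists>v. good N I T v"
proof (cases "I = {}")
  case False then show ?thesis unfolding good_def by auto
next
  case True
  have Tsub: "T \<subseteq> {0..<N}" using assms(2) unfolding valid_def by blast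
  have fT: "finite T" using Tsub by (rule finite_subset) simp
  then have "T \<noteq> {}" using assms True by auto
  then obtain v0 where "v0 \<in> T" by auto
  show ?thesis
  proof (rule ccontr)
    assume "\<not> ?thesis"
    then have "\<forall>v\<in>T. sc N v \<in> T" using True unfolding good_def by auto
    then have "T = {0..<N}" using closed_all[OF assms(1) \<open>v0 \<in> T\<close> Tsub] by blast
    then show False using assms True by simp
  qed
qed

lemma sc_range: "N \<ge> 2 \<Longrightarrow> sc N i < N" unfolding sc_def by simp



lemma flip_props:
  assumes N: "N \<ge> 2" and val: "valid N I T" and ex: "\<exists>v. good N I T v"
  defines "v \<equiv> LEAST v. good N I T v"
  shows "valid N (fst (flip N (I,T))) (snd (flip N (I,T))) \<and>
    card (fst (flip N (I,T))) + card (snd (flip N (I,T))) = card I + card T \<and>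
    (-1::int) ^ card (fst (flip N (I,T))) = - ((-1) ^ card I) \<and>
    flip N (flip N (I,T)) = (I,T)"
proof -
  have gv: "good N I T v" unfolding v_def using ex by (metis LeastI)
  have vmin: "\<And>u. good N I T u \<Longrightarrow> v \<le> u" unfolding v_def by (rule Least_le)
  have "I \<subseteq> {0..<N}" "T \<subseteq> {0..<N}" using val unfolding valid_def by blast+
  then have fI: "finite I" and fT: "finite T" by (auto intro: finite_subset)
  have fl: "flip N (I,T) = (if v \<in> I then (I - {v}, insert v T) else (insert v I, T - {v}))"
    unfolding flip_def v_def by (simp add: Let_def)
  show "valid N (fst (flip N (I,T))) (snd (flip N (I,T))) \<and>
    card (fst (flip N (I,T))) + card (snd (flip N (I,T))) = card I + card T \<and>
    (-1::int) ^ card (fst (flip N (I,T))) = - ((-1) ^ card I) \<and>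
    flip N (flip N (I,T)) = (I,T)"
  proof (cases "v \<in> I")
    case True
    let ?I = "I - {v}" and ?T = "insert v T"
    have vT: "v \<notin> T" using val True unfolding valid_def by auto
    have "valid N ?I ?T"
      using val True unfolding valid_def by auto
    moreover have "card ?I + card ?T = card I + card T"
    proof -
      have "card I > 0" using True fI card_gt_0_iff by blast
      then show ?thesis using card_Diff_singleton[OF True] card.insert[OF fT vT] by simp
    qed
    moreover have "(-1::int) ^ card ?I = - ((-1) ^ card I)"
    proof -
      have "card I > 0" using True fI card_gt_0_iff by blast
      then obtain m where "card I = Suc m" using gr0_implies_Suc by blast
      then show ?thesis using card_Diff_singleton[OF True] by simp
    qed
    moreover have "flip N (?I, ?T) = (I,T)"
    proof -
      have g': "good N ?I ?T v"
        using val True N sc_ne unfolding good_def valid_def by auto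
      have "\<And>u. good N ?I ?T u \<Longrightarrow> v \<le> u"
      proof -
        fix u assume "good N ?I ?T u"
        then have "u = v \<or> good N I T u" unfolding good_def by auto
        then show "v \<le> u" using vmin by auto
      qed
      then have "(LEAST u. good N ?I ?T u) = v" using g' by (meson Least_equality)
      then show ?thesis unfolding flip_def using True vT by (simp add: insert_absorb Let_def)
    qed
    ultimately show ?thesis using fl True by simp
  next
    case False
    let ?I = "insert v I" and ?T = "T - {v}"
    have vT: "v \<in> T" "sc N v \<notin> T" "sc N v \<notin> I" using gv False unfolding good_def by auto
    have "valid N ?I ?T"
      using val False vT sc_ne[OF N, of v] unfolding valid_def by auto
    moreover have "card ?I + card ?T = card I + card T"
    proof -
      have "card T > 0" using vT fT card_gt_0_iff by blast
      then show ?thesis using card_Diff_singleton[OF vT(1)] card.insert[OF fI False] by simp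
    qed
    moreover have "(-1::int) ^ card ?I = - ((-1) ^ card I)"
      using card.insert[OF fI False] by simp
    moreover have "flip N (?I, ?T) = (I,T)"
    proof -
      have g': "good N ?I ?T v" unfolding good_def by auto
      have "\<And>u. good N ?I ?T u \<Longrightarrow> v \<le> u"
      proof -
        fix u assume "good N ?I ?T u"
        then have "u = v \<or> good N I T u" unfolding good_def by auto
        then show "v \<le> u" using vmin by auto
      qed
      then have "(LEAST u. good N ?I ?T u) = v" using g' by (meson Least_equality)
      then show ?thesis unfolding flip_def using False vT by (simp add: insert_absorb Let_def)
    qed
    ultimately show ?thesis using fl False by simp
  qed
qed


lemma finite_valid: "finite {(I,T). valid N I T \<and> Q I T}"
proof -
  have "{(I,T). valid N I T \<and> Q I T} \<subseteq> Pow {0..<N} \<times> Pow {0..<N}"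
    unfolding valid_def by auto
  then show ?thesis by (rule finite_subset) auto
qed

lemma inv_sum:
  assumes N: "N \<ge> 2" and j: "1 \<le> j" "j < N"
  shows "(\<Sum>x\<in>{(I,T). valid N I T \<and> card I + card T = j}. (-1::int) ^ card (fst x)) = 0"
proof -
  let ?S = "{(I,T). valid N I T \<and> card I + card T = j}"
  let ?g = "\<lambda>x. (-1::int) ^ card (fst x)"
  have P: "valid N (fst (flip N x)) (snd (flip N x)) \<and>
    card (fst (flip N x)) + card (snd (flip N x)) = card (fst x) + card (snd x) \<and>
    ?g (flip N x) = - ?g x \<and> flip N (flip N x) = x" if "x \<in> ?S" for x
  proof -
    obtain I T where x: "x = (I,T)" by fastforce
    have "valid N I T" "card I + card T = j" using that x by auto
    then have "\<exists>v. good N I T v" using good_exists N j by blast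
    then show ?thesis using flip_props[OF N \<open>valid N I T\<close>] x by simp
  qed
  have inv: "flip N (flip N a) = a" if a: "a \<in> ?S" for a using P[OF a] by blast
  have mem: "flip N a \<in> ?S" if a: "a \<in> ?S" for a using P[OF a] a by (cases "flip N a") auto
  have neg: "?g (flip N a) = - ?g a" if a: "a \<in> ?S" for a using P[OF a] by blast
  have "sum (\<lambda>x. - ?g x) ?S = sum ?g ?S"
    apply (rule sum.reindex_bij_witness[of ?S "flip N" "flip N"])
    apply (erule inv) apply (erule mem) apply (erule inv) apply (erule mem) apply (erule neg) done
  then show ?thesis by (simp add: sum_negf)
qed

lemma card_P:
  assumes N: "N \<ge> 2" and k: "k \<le> j"
  shows "card {(I,T). valid N I T \<and> card I = k \<and> card T + k = j}
     = card (cyc_indep_sets N k) * ((N - 2 * k) choose (j - k))"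
proof -
  let ?B = "\<lambda>I. {T. T \<subseteq> {0..<N} - (I \<union> sc N ` I) \<and> card T = j - k}"
  have eq: "{(I,T). valid N I T \<and> card I = k \<and> card T + k = j} = Sigma (cyc_indep_sets N k) ?B"
    using k unfolding valid_def cyc_indep_sets_def sc_def by auto
  have fin: "finite (cyc_indep_sets N k)"
  proof -
    have "cyc_indep_sets N k \<subseteq> Pow {0..<N}" unfolding cyc_indep_sets_def by auto
    then show ?thesis by (rule finite_subset) auto
  qed
  have cB: "card (?B I) = (N - 2 * k) choose (j - k)" if "I \<in> cyc_indep_sets N k" for I
  proof -
    have I: "I \<subseteq> {0..<N}" "card I = k" "\<forall>i\<in>I. \<forall>i'\<in>I. i \<noteq> sc N i'"
      using that unfolding cyc_indep_sets_def sc_def by auto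
    have fI: "finite I" using I(1) finite_subset by blast
    have disj: "I \<inter> sc N ` I = {}" using I(3) by auto
    have ci: "card (sc N ` I) = k" using I card_image inj_on_subset[OF sc_inj I(1)] by metis
    have sub: "I \<union> sc N ` I \<subseteq> {0..<N}" using I(1) sc_range[OF N] by auto
    have "card (I \<union> sc N ` I) = 2 * k" using card_Un_disjoint[OF fI finite_imageI[OF fI] disj] ci I(2) by simp
    then have "card ({0..<N} - (I \<union> sc N ` I)) = N - 2 * k" using card_Diff_subset[OF finite_subset[OF sub] sub] by simp
    then show ?thesis using n_subsets[of "{0..<N} - (I \<union> sc N ` I)" "j - k"] by simp
  qed
  have "card (Sigma (cyc_indep_sets N k) ?B) = (\<Sum>I\<in>cyc_indep_sets N k. card (?B I))"
    by (rule card_SigmaI) (use fin in auto)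
  also have "\<dots> = card (cyc_indep_sets N k) * ((N - 2 * k) choose (j - k))"
    using cB by simp
  finally show ?thesis using eq by simp
qed


theorem mainTheorem2:
  fixes N j :: nat
  assumes "N \<ge> 2" and "1 \<le> j" and "j \<le> N div 2"
  shows "(\<Sum>k=0..j. (-1::int) ^ k * int (card (cyc_indep_sets N k))
            * int ((N - 2 * k) choose (j - k))) = 0"
proof -
  have jN: "j < N" using assms by linarith
  let ?P = "\<lambda>k. {(I,T). valid N I T \<and> card I = k \<and> card T + k = j}"
  let ?g = "\<lambda>x. (-1::int) ^ card (fst x)"
  have "(\<Sum>k=0..j. (-1::int) ^ k * int (card (cyc_indep_sets N k))
            * int ((N - 2 * k) choose (j - k))) = (\<Sum>k=0..j. sum ?g (?P k))"
  proof (rule sum.cong)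
    fix k assume "k \<in> {0..j}"
    then have k: "k \<le> j" by simp
    have "sum ?g (?P k) = sum (\<lambda>x. (-1::int) ^ k) (?P k)"
      by (rule sum.cong) auto
    also have "\<dots> = (-1) ^ k * int (card (?P k))" by simp
    also have "\<dots> = (-1::int) ^ k * int (card (cyc_indep_sets N k)) * int ((N - 2 * k) choose (j - k))"
      using card_P[OF assms(1) k] by simp
    finally show "(-1::int) ^ k * int (card (cyc_indep_sets N k)) * int ((N - 2 * k) choose (j - k))
       = sum ?g (?P k)" by simp
  qed simp
  also have "\<dots> = sum ?g (\<Union>k\<in>{0..j}. ?P k)"
  proof (rule sum.UNION_disjoint[symmetric])
    show "finite {0..j}" by simp
    show "\<forall>k\<in>{0..j}. finite (?P k)" using finite_valid[of N "\<lambda>I T. card I = k \<and> card T + k = j" for k] by blast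
    show "\<forall>k\<in>{0..j}. \<forall>k'\<in>{0..j}. k \<noteq> k' \<longrightarrow> ?P k \<inter> ?P k' = {}" by blast
  qed
  also have "(\<Union>k\<in>{0..j}. ?P k) = {(I,T). valid N I T \<and> card I + card T = j}"
  proof (intro equalityI subsetI)
    fix x assume "x \<in> (\<Union>k\<in>{0..j}. ?P k)"
    then show "x \<in> {(I,T). valid N I T \<and> card I + card T = j}" by force
  next
    fix x assume x: "x \<in> {(I,T). valid N I T \<and> card I + card T = j}"
    obtain I T where xe: "x = (I,T)" by fastforce
    have "x \<in> ?P (card I)" "card I \<in> {0..j}" using x xe by auto
    then show "x \<in> (\<Union>k\<in>{0..j}. ?P k)" by blast
  qed
  also have "sum ?g \<dots> = 0" using inv_sum[OF assms(1,2) jN] by simp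
  finally show ?thesis .
qed

end
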